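(* Let $M\in\mathbb{N}$ be divisible neither by $2^4$ nor by the square of any odd prime, let $k$ be a positive integer, and suppose $d=\dim S_k^{\rm new}(\Gamma_0(M))\ge2$. Let $\varphi_1,\ldots,\varphi_d$ be the normalized newforms forming a basis of $S_k^{\rm new}(\Gamma_0(M))$, with Fourier coefficients $a_i(n)$, and for primes $p\nmid M$ define $\theta_i(p)\in[0,\tfrac12]$ by $a_i(p)=2p^{\frac{k-1}{2}}\cos(2\pi\theta_i(p))$. Let $p\nmid M$ be a prime such that for every pair of indices $i\ne j$ the numbers $1,\theta_i(p),\theta_j(p)$ are linearly independent over $\mathbb{Q}$. Then for any index $i_1\in\{1,\ldots,d\}$ there exist distinct non-zero integers $n_1,\ldots,n_d$ such that (1) $n_{i_1}\nmid n_i$ for all $i\ne i_1$; (2) for every $t\in\mathbb{R}$ and every $\varepsilon>0$ there exists $n\in\mathbb{N}$ such that $\min\{|n\theta_i(p)-n_it-m|:m\in\mathbb{Z}\}<\varepsilon$ for all $i=1,\ldots,d$.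
   Context: $S_k^{\rm new}(\Gamma_0(M))$ is the new subspace of weight-$k$ holomorphic cusp forms for $\Gamma_0(M)$ with trivial character; normalized newforms have real coefficients with $|a_i(p)|\le 2p^{(k-1)/2}$. The assumption $d\ge 2$ is a standing assumption of the section of the paper containing this lemma. *)

theory Defs
  imports Complex_Main "HOL-Computational_Algebra.Primes"
begin

definition lin_indep_Q_1 :: "real \<Rightarrow> real \<Rightarrow> bool" where
  "lin_indep_Q_1 x y \<longleftrightarrow>
     (\<forall>q0 q1 q2 :: rat. of_rat q0 + of_rat q1 * x + of_rat q2 * y = 0
        \<longrightarrow> q0 = 0 \<and> q1 = 0 \<and> q2 = 0)"

definition dist_Z :: "real \<Rightarrow> real" where
  "dist_Z x = (INF m::int. \<bar>x - of_int m\<bar>)"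

end

theory Submission
  imports Defs "HOL-Analysis.Kronecker_Approximation_Theorem"
begin


definition indepZ :: "(nat \<Rightarrow> real) \<Rightarrow> nat set \<Rightarrow> bool" where
  "indepZ \<theta> B \<longleftrightarrow> (\<forall>(q0::int) (q::nat \<Rightarrow> int).
      of_int q0 + (\<Sum>b\<in>B. of_int (q b) * \<theta> b) = 0 \<longrightarrow> q0 = 0 \<and> (\<forall>b\<in>B. q b = 0))"

lemma lin_indep_int:
  assumes "lin_indep_Q_1 x y" "of_int a + of_int b * x + of_int c * y = 0"
  shows "a = 0 \<and> b = 0 \<and> c = 0"
  using assms(1)[unfolded lin_indep_Q_1_def, rule_format, of "of_int a" "of_int b" "of_int c"] assms(2)
  by simp

lemma KI_n:
  fixes \<theta> \<alpha> :: "nat \<Rightarrow> real" and n :: nat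
  assumes ind: "indepZ \<theta> {..<n}" and eps: "\<epsilon> > 0"
  shows "\<exists>k::int. \<forall>j<n. \<exists>z::int. \<bar>of_int k * \<theta> j - of_int z - \<alpha> j\<bar> < \<epsilon>"
proof -
  interpret Modules.module "(\<lambda>r. (*) (real_of_int r))"
    by (simp add: Modules.module.intro distrib_left mult.commute)
  define \<theta>' where "\<theta>' = (\<lambda>j. if j = n then 1 else \<theta> j)"
  have inj: "inj_on \<theta>' {..n}"
  proof (rule inj_onI)
    fix i j assume ij: "i \<in> {..n}" "j \<in> {..n}" "\<theta>' i = \<theta>' j"
    show "i = j"
    proof (rule ccontr)
      assume ne: "i \<noteq> j"
      have one: False if "j < n" "\<theta> j = 1" for j
      proof -
        have "(\<Sum>b\<in>{..<n}. of_int (if b = j then 1 else 0) * \<theta> b) = (\<Sum>b\<in>{..<n}. if b = j then \<theta> b else 0)"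
          by (rule sum.cong) auto
        then have "of_int (-1) + (\<Sum>b\<in>{..<n}. of_int (if b = j then 1 else 0) * \<theta> b) = 0"
          using that by simp
        from ind[unfolded indepZ_def, rule_format, OF this] show False by simp
      qed
      show False
      proof (cases "i = n")
        case True
        then show ?thesis using ne ij one[of j] by (auto simp: \<theta>'_def)
      next
        case False
        note iF = False
        show ?thesis
        proof (cases "j = n")
          case True
          then show ?thesis using ne ij one[of i] iF by (auto simp: \<theta>'_def)
        next
          case False
          then have lt: "i < n" "j < n" "\<theta> i = \<theta> j" using iF ij by (auto simp: \<theta>'_def)
          have "(\<Sum>b\<in>{..<n}. of_int ((if b = i then 1 else 0) - (if b = j then 1 else 0)) * \<theta> b) = (\<Sum>b\<in>{..<n}. (if b = i then \<theta> b else 0) - (if b = j then \<theta> b else 0))"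
            by (rule sum.cong) auto
          then have "of_int 0 + (\<Sum>b\<in>{..<n}. of_int ((if b = i then 1 else 0) - (if b = j then 1 else 0)) * \<theta> b) = 0"
            using lt by (simp add: sum_subtractf)
          from ind[unfolded indepZ_def, rule_format, OF this] lt
          have "(if i = i then 1 else 0) - (if i = j then 1 else (0::int)) = 0" by blast
          then show False using ne by simp
        qed
      qed
    qed
  qed
  have indep: "independent (\<theta>' ` {..n})"
  proof -
    have "\<forall>v\<in>\<theta>' ` {..n}. u v = 0" if u: "(\<Sum>v\<in>\<theta>' ` {..n}. of_int (u v) * v) = 0" for u
    proof -
      have "(\<Sum>v\<in>\<theta>' ` {..n}. of_int (u v) * v) = (\<Sum>j\<in>{..n}. of_int (u (\<theta>' j)) * \<theta>' j)"
        using inj by (simp add: sum.reindex)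
      also have "\<dots> = of_int (u 1) + (\<Sum>j\<in>{..<n}. of_int (u (\<theta> j)) * \<theta> j)"
        by (simp add: lessThan_Suc_atMost[symmetric] \<theta>'_def)
      finally have "of_int (u 1) + (\<Sum>j\<in>{..<n}. of_int (u (\<theta> j)) * \<theta> j) = 0" using u by simp
      from ind[unfolded indepZ_def, rule_format, OF this]
      have "u 1 = 0 \<and> (\<forall>j\<in>{..<n}. u (\<theta> j) = 0)" by blast
      then show ?thesis by (auto simp: \<theta>'_def)
    qed
    then show ?thesis
      by (subst dependent_finite) auto
  qed
  obtain k m where km: "\<And>i. i < n \<Longrightarrow> \<bar>of_int k * \<theta>' i - of_int (m i) - \<alpha> i\<bar> < \<epsilon>"
    using Kronecker_thm_2[of \<theta>' n \<epsilon> \<alpha>] indep inj eps by (auto simp: \<theta>'_def)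
  show ?thesis
    using km by (auto simp: \<theta>'_def)
qed

lemma KI:
  fixes \<theta> \<alpha> :: "nat \<Rightarrow> real"
  assumes fin: "finite B" and ind: "indepZ \<theta> B" and eps: "\<epsilon> > 0"
  shows "\<exists>k::int. \<forall>b\<in>B. \<exists>z::int. \<bar>of_int k * \<theta> b - of_int z - \<alpha> b\<bar> < \<epsilon>"
proof -
  obtain e where e0: "bij_betw e {0..<card B} B" using ex_bij_betw_nat_finite[OF fin] by blast
  then have e: "bij_betw e {..<card B} B" by (simp add: atLeast0LessThan)
  have inj: "inj_on e {..<card B}" using e by (rule bij_betw_imp_inj_on)
  have img: "e ` {..<card B} = B" using e by (rule bij_betw_imp_surj_on)
  have "indepZ (\<theta> \<circ> e) {..<card B}"
    unfolding indepZ_def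
  proof (intro allI impI)
    fix q0 q assume h: "of_int q0 + (\<Sum>j\<in>{..<card B}. of_int (q j) * (\<theta> \<circ> e) j) = (0::real)"
    define q' where "q' = q \<circ> inv_into {..<card B} e"
    have "(\<Sum>b\<in>B. of_int (q' b) * \<theta> b) = (\<Sum>j\<in>{..<card B}. of_int (q' (e j)) * \<theta> (e j))"
      using sum.reindex_bij_betw[OF e, of "\<lambda>b. of_int (q' b) * \<theta> b"] by simp
    also have "\<dots> = (\<Sum>j\<in>{..<card B}. of_int (q j) * (\<theta> \<circ> e) j)"
      by (rule sum.cong) (auto simp: q'_def inv_into_f_f[OF inj])
    finally have "of_int q0 + (\<Sum>b\<in>B. of_int (q' b) * \<theta> b) = 0" using h by simp
    from ind[unfolded indepZ_def, rule_format, OF this]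
    have "q0 = 0 \<and> (\<forall>b\<in>B. q' b = 0)" .
    moreover have "q j = q' (e j)" if "j \<in> {..<card B}" for j
      using that by (simp add: q'_def inv_into_f_f[OF inj])
    ultimately show "q0 = 0 \<and> (\<forall>j\<in>{..<card B}. q j = 0)" using img by auto
  qed
  from KI_n[OF this eps, where \<alpha>="\<alpha> \<circ> e"] obtain k where
    k: "\<forall>j<card B. \<exists>z::int. \<bar>of_int k * \<theta> (e j) - of_int z - \<alpha> (e j)\<bar> < \<epsilon>" by auto
  show ?thesis
  proof (rule exI[of _ k], intro ballI)
    fix b assume "b \<in> B"
    then obtain j where "j < card B" "b = e j" using img by auto
    then show "\<exists>z::int. \<bar>of_int k * \<theta> b - of_int z - \<alpha> b\<bar> < \<epsilon>" using k by auto
  qed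
qed

lemma int_half: "\<bar>of_int (z::int) + 1/2\<bar> \<ge> (1/2::real)"
proof (cases "z \<ge> 0")
  case True then show ?thesis by simp
next
  case False then have "of_int z \<le> (-1::real)" by simp
  then show ?thesis by simp
qed

lemma Kpos:
  fixes \<theta> \<alpha> :: "nat \<Rightarrow> real"
  assumes fin: "finite B" and ind: "indepZ \<theta> B" and eps: "\<epsilon> > 0" and b0: "b0 \<in> B"
  shows "\<exists>m::nat. m \<ge> 1 \<and> (\<forall>b\<in>B. \<exists>z::int. \<bar>of_nat m * \<theta> b - of_int z - \<alpha> b\<bar> < \<epsilon>)"
proof -
  obtain k1 where k1: "\<forall>b\<in>B. \<exists>z::int. \<bar>of_int k1 * \<theta> b - of_int z - \<alpha> b\<bar> < \<epsilon>/2"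
    using KI[OF fin ind, where \<epsilon>="\<epsilon>/2" and \<alpha>=\<alpha>] eps by auto
  define j :: int where "j = \<bar>k1\<bar> + 1"
  have jpos: "j \<ge> 1" by (simp add: j_def)
  define \<eta> :: real where "\<eta> = min (1/4) (\<epsilon> / (4 * of_int j))"
  have eta: "\<eta> > 0" "\<eta> \<le> 1/4" "\<eta> \<le> \<epsilon> / (4 * of_int j)" using eps jpos by (auto simp: \<eta>_def)
  obtain k3 where k3: "\<forall>b\<in>B. \<exists>z::int. \<bar>of_int k3 * \<theta> b - of_int z - (if b = b0 then 1/2 else 0)\<bar> < \<eta>"
    using KI[OF fin ind eta(1), where \<alpha>="\<lambda>b. if b = b0 then 1/2 else 0"] by auto
  have "k3 \<noteq> 0"
  proof
    assume "k3 = 0"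
    with k3 b0 obtain z :: int where "\<bar>- of_int z - 1/2\<bar> < \<eta>" by auto
    moreover have "\<bar>- of_int z - 1/2\<bar> = \<bar>of_int z + (1/2::real)\<bar>" by linarith
    ultimately show False using int_half[of z] eta by linarith
  qed
  define K where "K = 2 * \<bar>k3\<bar>"
  have Kpos: "K \<ge> 1" using \<open>k3 \<noteq> 0\<close> by (simp add: K_def)
  have K: "\<exists>z::int. \<bar>of_int K * \<theta> b - of_int z\<bar> < 2 * \<eta>" if bB: "b \<in> B" for b
  proof -
    obtain z :: int where z: "\<bar>of_int k3 * \<theta> b - of_int z - (if b = b0 then 1/2 else 0)\<bar> < \<eta>"
      using k3 bB by auto
    define w :: int where "w = 2 * z + (if b = b0 then 1 else 0)"
    have "\<bar>2 * (of_int k3 * \<theta> b) - of_int w\<bar> < 2 * \<eta>"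
      using z by (auto simp: w_def split: if_splits)
    then have h: "\<bar>of_int (2 * k3) * \<theta> b - of_int w\<bar> < 2 * \<eta>" by simp
    show ?thesis
    proof (cases "k3 \<ge> 0")
      case True
      then show ?thesis using h by (intro exI[of _ w]) (simp add: K_def)
    next
      case False
      then have "of_int K * \<theta> b - of_int (-w) = - (of_int (2 * k3) * \<theta> b - of_int w)"
        by (simp add: K_def)
      then show ?thesis using h by (intro exI[of _ "-w"]) (simp only: abs_minus_cancel)
    qed
  qed
  define m :: int where "m = k1 + j * K"
  have "m \<ge> 1"
  proof -
    have "j * K \<ge> j * 1" using Kpos jpos by (intro mult_left_mono) auto
    moreover have "- k1 \<le> \<bar>k1\<bar>" by simp
    ultimately show ?thesis unfolding m_def using j_def by linarith
  qed
  show ?thesis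
  proof (intro exI[of _ "nat m"] conjI ballI)
    show "nat m \<ge> 1" using \<open>m \<ge> 1\<close> by simp
    fix b assume b: "b \<in> B"
    obtain z1 :: int where z1: "\<bar>of_int k1 * \<theta> b - of_int z1 - \<alpha> b\<bar> < \<epsilon>/2" using k1 b by auto
    obtain z2 :: int where z2: "\<bar>of_int K * \<theta> b - of_int z2\<bar> < 2 * \<eta>" using K b by auto
    have eqm: "of_nat (nat m) * \<theta> b - of_int (z1 + j * z2) - \<alpha> b
        = (of_int k1 * \<theta> b - of_int z1 - \<alpha> b) + of_int j * (of_int K * \<theta> b - of_int z2)"
      using \<open>m \<ge> 1\<close> by (simp add: m_def algebra_simps)
    have "\<bar>of_int j * (of_int K * \<theta> b - of_int z2)\<bar> \<le> of_int j * (2 * \<eta>)"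
      using z2 jpos by (simp add: abs_mult)
    also have "\<dots> \<le> of_int j * (2 * (\<epsilon> / (4 * of_int j)))"
      using eta jpos by (intro mult_left_mono) auto
    also have "\<dots> = \<epsilon>/2" using jpos by (simp add: field_simps)
    finally have "\<bar>of_int j * (of_int K * \<theta> b - of_int z2)\<bar> \<le> \<epsilon>/2" .
    then show "\<exists>z::int. \<bar>of_nat (nat m) * \<theta> b - of_int z - \<alpha> b\<bar> < \<epsilon>"
      using z1 eqm by (intro exI[of _ "z1 + j * z2"]) linarith
  qed
qed

lemma avoid_forms:
  assumes "finite S" "finite F" "\<forall>f\<in>F. \<exists>b\<in>S. f b \<noteq> (0::int)"
  shows "\<exists>y::nat \<Rightarrow> int. \<forall>f\<in>F. (\<Sum>b\<in>S. f b * y b) \<noteq> 0"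
  using assms
proof (induction S arbitrary: F rule: finite_induct)
  case empty then show ?case by auto
next
  case (insert a S)
  define F1 where "F1 = {f\<in>F. \<exists>b\<in>S. f b \<noteq> 0}"
  have "finite F1" using insert.prems(1) by (simp add: F1_def)
  moreover have "\<forall>f\<in>F1. \<exists>b\<in>S. f b \<noteq> 0" by (simp add: F1_def)
  ultimately obtain y where y: "\<forall>f\<in>F1. (\<Sum>b\<in>S. f b * y b) \<noteq> 0"
    using insert.IH by blast
  define v where "v = 1 + (\<Sum>f\<in>F. \<bar>\<Sum>b\<in>S. f b * y b\<bar>)"
  define y' where "y' = y(a := v)"
  show ?case
  proof (rule exI[of _ y'], intro ballI)
    fix f assume f: "f \<in> F"
    have "(\<Sum>b\<in>S. f b * y' b) = (\<Sum>b\<in>S. f b * y b)"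
    proof (rule sum.cong)
      fix b assume "b \<in> S"
      then have "b \<noteq> a" using insert.hyps(2) by blast
      then show "f b * y' b = f b * y b" by (simp add: y'_def)
    qed simp
    moreover have "(\<Sum>b\<in>insert a S. f b * y' b) = f a * y' a + (\<Sum>b\<in>S. f b * y' b)"
      by (rule sum.insert[OF insert.hyps(1,2)])
    moreover have "y' a = v" by (simp add: y'_def)
    ultimately have eq: "(\<Sum>b\<in>insert a S. f b * y' b) = f a * v + (\<Sum>b\<in>S. f b * y b)"
      by simp
    have "\<bar>\<Sum>b\<in>S. f b * y b\<bar> \<le> (\<Sum>f\<in>F. \<bar>\<Sum>b\<in>S. f b * y b\<bar>)"
      by (rule member_le_sum[where f="\<lambda>f. \<bar>\<Sum>b\<in>S. f b * y b\<bar>", OF f _ insert.prems(1)]) simp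
    then have le: "\<bar>\<Sum>b\<in>S. f b * y b\<bar> < v" unfolding v_def by linarith
    show "(\<Sum>b\<in>insert a S. f b * y' b) \<noteq> 0"
    proof (cases "f a = 0")
      case True
      then have "\<exists>b\<in>S. f b \<noteq> 0" using f insert.prems(2) by auto
      then have "f \<in> F1" using f by (simp add: F1_def)
      then show ?thesis using eq True y by simp
    next
      case False
      have "0 \<le> (\<Sum>f\<in>F. \<bar>\<Sum>b\<in>S. f b * y b\<bar>)" by (rule sum_nonneg) simp
      then have "v \<ge> 1" unfolding v_def by linarith
      then have "\<bar>f a * v\<bar> \<ge> v" using False by (simp add: abs_mult mult_le_cancel_right1)
      then show ?thesis using eq le by linarith
    qed
  qed
qed



lemma dist_Z_le: "dist_Z x \<le> \<bar>x - of_int m\<bar>"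
  unfolding dist_Z_def by (rule cINF_lower) (auto intro: bdd_belowI2[of _ 0])

lemma sum_ind_real:
  assumes "finite B" "i \<in> B"
  shows "(\<Sum>b\<in>B. of_int (if b = i then 1 else 0) * (\<theta> b::real)) = \<theta> i"
proof -
  have "(\<Sum>b\<in>B. of_int (if b = i then 1 else 0) * \<theta> b) = (\<Sum>b\<in>B. if b = i then \<theta> b else 0)"
    by (rule sum.cong) auto
  then show ?thesis using assms by simp
qed

lemma abs_ge1: "(x::int) \<noteq> 0 \<Longrightarrow> 1 \<le> \<bar>x\<bar>" by arith

lemma abs_mult_ge: "(x::int) \<noteq> 0 \<Longrightarrow> (q::int) \<ge> 0 \<Longrightarrow> \<bar>x * q\<bar> \<ge> q"
proof -
  assume "x \<noteq> 0" "q \<ge> 0"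
  then have "1 * q \<le> \<bar>x\<bar> * q" using abs_ge1 by (intro mult_right_mono) auto
  then show ?thesis using \<open>q \<ge> 0\<close> by (simp add: abs_mult)
qed

theorem lemma3p2:
  fixes M k p d i1 :: nat and a :: "nat \<Rightarrow> nat \<Rightarrow> real" and \<theta> :: "nat \<Rightarrow> real"
  assumes M_pos: "M \<ge> 1"
    and M_16: "\<not> (2::nat)^4 dvd M"
    and M_sq: "\<And>q. prime q \<Longrightarrow> odd q \<Longrightarrow> \<not> q^2 dvd M"
    and k_pos: "k \<ge> 1"
    and d_ge: "d \<ge> 2"
    and p_prime: "prime p" and p_ndvd: "\<not> p dvd M"
    and theta_range: "\<And>i. i \<in> {1..d} \<Longrightarrow> \<theta> i \<in> {0..1/2}"
    and theta_def: "\<And>i. i \<in> {1..d} \<Longrightarrow>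
           a i p = 2 * real p powr ((real k - 1) / 2) * cos (2 * pi * \<theta> i)"
    and indep: "\<And>i j. i \<in> {1..d} \<Longrightarrow> j \<in> {1..d} \<Longrightarrow> i \<noteq> j \<Longrightarrow>
           lin_indep_Q_1 (\<theta> i) (\<theta> j)"
    and i1: "i1 \<in> {1..d}"
  shows "\<exists>n :: nat \<Rightarrow> int.
           (\<forall>i\<in>{1..d}. n i \<noteq> 0) \<and> inj_on n {1..d} \<and>
           (\<forall>i\<in>{1..d}. i \<noteq> i1 \<longrightarrow> \<not> n i1 dvd n i) \<and>
           (\<forall>t::real. \<forall>\<epsilon>>0. \<exists>m::nat. m \<ge> 1 \<and>
              (\<forall>i\<in>{1..d}. dist_Z (real m * \<theta> i - of_int (n i) * t) < \<epsilon>))"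
proof -
  obtain j0 where j0: "j0 \<in> {1..d}" "j0 \<noteq> i1"
  proof (cases "i1 = 1")
    case True then show ?thesis using that[of 2] d_ge by auto
  next
    case False then show ?thesis using that[of 1] d_ge by auto
  qed
  have ind1: "indepZ \<theta> {i1}"
    unfolding indepZ_def
  proof (intro allI impI)
    fix q0 :: int and q :: "nat \<Rightarrow> int"
    assume "of_int q0 + (\<Sum>b\<in>{i1}. of_int (q b) * \<theta> b) = 0"
    then have "of_int q0 + of_int (q i1) * \<theta> i1 + of_int 0 * \<theta> j0 = 0" by simp
    from lin_indep_int[OF indep[OF i1 j0(1) j0(2)[symmetric]] this]
    show "q0 = 0 \<and> (\<forall>b\<in>{i1}. q b = 0)" by simp
  qed
  define Sset where "Sset = {B. B \<subseteq> {1..d} \<and> i1 \<in> B \<and> indepZ \<theta> B}"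
  have finS: "finite Sset"
    by (rule finite_subset[of Sset "Pow {1..d}"]) (auto simp: Sset_def)
  have i1S: "{i1} \<in> Sset" using i1 ind1 by (simp add: Sset_def)
  have "Max (card ` Sset) \<in> card ` Sset" using finS i1S by (intro Max_in) auto
  then obtain B where BS: "B \<in> Sset" and Bmax: "card B = Max (card ` Sset)"
    by auto
  have Bsub: "B \<subseteq> {1..d}" and i1B: "i1 \<in> B" and indB: "indepZ \<theta> B"
    using BS by (auto simp: Sset_def)
  have finB: "finite B" using Bsub finite_subset by blast
  have maxi: "\<not> indepZ \<theta> (insert i B)" if "i \<in> {1..d}" "i \<notin> B" for i
  proof
    assume "indepZ \<theta> (insert i B)"
    then have "insert i B \<in> Sset" using that Bsub i1B by (auto simp: Sset_def)
    then have "card (insert i B) \<le> card B" using Bmax finS by simp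
    then show False using that finB by simp
  qed
  have rel: "\<forall>i\<in>{1..d}. \<exists>T :: int \<times> int \<times> (nat \<Rightarrow> int). fst T \<noteq> 0 \<and>
      of_int (fst T) * \<theta> i = of_int (fst (snd T)) + (\<Sum>b\<in>B. of_int (snd (snd T) b) * \<theta> b) \<and>
      (i = i1 \<longrightarrow> fst T = 1 \<and> fst (snd T) = 0 \<and> snd (snd T) = (\<lambda>b. if b = i1 then 1 else 0))"
  proof
    fix i assume i: "i \<in> {1..d}"
    show "\<exists>T :: int \<times> int \<times> (nat \<Rightarrow> int). fst T \<noteq> 0 \<and>
      of_int (fst T) * \<theta> i = of_int (fst (snd T)) + (\<Sum>b\<in>B. of_int (snd (snd T) b) * \<theta> b) \<and>
      (i = i1 \<longrightarrow> fst T = 1 \<and> fst (snd T) = 0 \<and> snd (snd T) = (\<lambda>b. if b = i1 then 1 else 0))"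
    proof (cases "i \<in> B")
      case True
      show ?thesis
        by (rule exI[of _ "(1, 0, \<lambda>b. if b = i then 1 else 0)"])
          (simp add: sum_ind_real[OF finB True])
    next
      case False
      from maxi[OF i False] obtain q0 :: int and q :: "nat \<Rightarrow> int" where
        q: "of_int q0 + (\<Sum>b\<in>insert i B. of_int (q b) * \<theta> b) = 0"
        and nz: "\<not> (q0 = 0 \<and> (\<forall>b\<in>insert i B. q b = 0))"
        unfolding indepZ_def by blast
      have q': "of_int q0 + of_int (q i) * \<theta> i + (\<Sum>b\<in>B. of_int (q b) * \<theta> b) = 0"
        using q False finB by (simp add: add.assoc)
      have qi: "q i \<noteq> 0"
      proof
        assume "q i = 0"
        then have "of_int q0 + (\<Sum>b\<in>B. of_int (q b) * \<theta> b) = 0" using q' by simp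
        from indB[unfolded indepZ_def, rule_format, OF this] nz \<open>q i = 0\<close> show False by auto
      qed
      have "of_int (q i) * \<theta> i = of_int (- q0) + (\<Sum>b\<in>B. of_int (- q b) * \<theta> b)"
        using q' by (simp add: sum_negf)
      moreover have "i \<noteq> i1" using False i1B by auto
      ultimately show ?thesis using qi
        by (intro exI[of _ "(q i, - q0, \<lambda>b. - q b)"]) simp
    qed
  qed
  from bchoice[OF rel] obtain T where T: "\<forall>i\<in>{1..d}. fst (T i) \<noteq> 0 \<and>
      of_int (fst (T i)) * \<theta> i = of_int (fst (snd (T i))) + (\<Sum>b\<in>B. of_int (snd (snd (T i)) b) * \<theta> b) \<and>
      (i = i1 \<longrightarrow> fst (T i) = 1 \<and> fst (snd (T i)) = 0 \<and> snd (snd (T i)) = (\<lambda>b. if b = i1 then 1 else 0))"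
    by blast
  define D where "D i = fst (T i)" for i
  define c0 where "c0 i = fst (snd (T i))" for i
  define c where "c i = snd (snd (T i))" for i
  have Dnz: "D i \<noteq> 0" if "i \<in> {1..d}" for i using T that by (simp add: D_def)
  have Drel: "of_int (D i) * \<theta> i = of_int (c0 i) + (\<Sum>b\<in>B. of_int (c i b) * \<theta> b)"
    if "i \<in> {1..d}" for i using T that by (simp add: D_def c0_def c_def)
  have D1: "D i1 = 1" and c01: "c0 i1 = 0" and c1: "c i1 = (\<lambda>b. if b = i1 then 1 else 0)"
    using T i1 by (auto simp: D_def c0_def c_def)
  define P :: int where "P = (\<Prod>i\<in>{1..d}. \<bar>D i\<bar>)"
  have Ppos: "P > 0" unfolding P_def using Dnz by (intro prod_pos) auto
  have Ddvd: "D i dvd P" if "i \<in> {1..d}" for i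
  proof -
    have "\<bar>D i\<bar> dvd P" unfolding P_def using that by (intro dvd_prodI) auto
    then show ?thesis by simp
  qed
  define E where "E i = P div D i" for i
  have ED: "E i * D i = P" if "i \<in> {1..d}" for i
    using Ddvd[OF that] by (simp add: E_def)
  have Enz: "E i \<noteq> 0" if "i \<in> {1..d}" for i using ED[OF that] Ppos by auto
  have E1: "E i1 = P" using D1 by (simp add: E_def)
  have relP: "of_int P * \<theta> i = of_int (E i * c0 i) + (\<Sum>b\<in>B. of_int (E i * c i b) * \<theta> b)"
    if i: "i \<in> {1..d}" for i
  proof -
    have "of_int P * \<theta> i = of_int (E i) * (of_int (D i) * \<theta> i)"
      using ED[OF i] by (metis mult.assoc of_int_mult)
    also have "\<dots> = of_int (E i) * (of_int (c0 i) + (\<Sum>b\<in>B. of_int (c i b) * \<theta> b))"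
      using Drel[OF i] by simp
    also have "\<dots> = of_int (E i * c0 i) + (\<Sum>b\<in>B. of_int (E i * c i b) * \<theta> b)"
      by (simp add: distrib_left sum_distrib_left mult.assoc)
    finally show ?thesis .
  qed
  define Bp where "Bp = B - {i1}"
  have sumB: "(\<Sum>b\<in>B. f b) = f i1 + (\<Sum>b\<in>Bp. f b)" for f :: "nat \<Rightarrow> 'x::comm_monoid_add"
    unfolding Bp_def by (rule sum.remove[OF finB i1B])
  have F1: "\<exists>b\<in>Bp. c i b \<noteq> 0" if i: "i \<in> {1..d}" "i \<noteq> i1" for i
  proof (rule ccontr)
    assume "\<not> ?thesis"
    then have z: "\<forall>b\<in>Bp. c i b = 0" by auto
    have "(\<Sum>b\<in>Bp. of_int (c i b) * \<theta> b) = 0" using z by simp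
    then have "of_int (D i) * \<theta> i = of_int (c0 i) + of_int (c i i1) * \<theta> i1"
      using Drel[OF i(1)] sumB[of "\<lambda>b. of_int (c i b) * \<theta> b"] by simp
    then have "of_int (- c0 i) + of_int (D i) * \<theta> i + of_int (- c i i1) * \<theta> i1 = 0" by simp
    from lin_indep_int[OF indep[OF i(1) i1 i(2)] this] Dnz[OF i(1)] show False by simp
  qed
  have F2: "\<exists>b\<in>Bp. E i * c i b - E j * c j b \<noteq> 0"
    if ij: "i \<in> {1..d}" "j \<in> {1..d}" "i \<noteq> j" "E i * c i i1 = E j * c j i1" for i j
  proof (rule ccontr)
    assume "\<not> ?thesis"
    then have z: "\<forall>b\<in>B. E i * c i b = E j * c j b" using ij(4) by (auto simp: Bp_def)
    have "(\<Sum>b\<in>B. of_int (E i * c i b) * \<theta> b) = (\<Sum>b\<in>B. of_int (E j * c j b) * \<theta> b)"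
      using z by (intro sum.cong) auto
    then have "of_int P * \<theta> i - of_int (E i * c0 i) = of_int P * \<theta> j - of_int (E j * c0 j)"
      using relP[OF ij(1)] relP[OF ij(2)] by simp
    then have "of_int (E j * c0 j - E i * c0 i) + of_int P * \<theta> i + of_int (- P) * \<theta> j = 0"
      by simp
    from lin_indep_int[OF indep[OF ij(1) ij(2) ij(3)] this] Ppos show False by simp
  qed
  define Fset where "Fset = (\<lambda>i. c i) ` ({1..d} - {i1}) \<union>
      (\<lambda>(i,j). \<lambda>b. E i * c i b - E j * c j b) ` {(i,j). i \<in> {1..d} - {i1} \<and> j \<in> {1..d} - {i1} \<and> i \<noteq> j \<and> E i * c i i1 = E j * c j i1}"
  have finF: "finite Fset"
  proof -
    have "{(i,j). i \<in> {1..d} - {i1} \<and> j \<in> {1..d} - {i1} \<and> i \<noteq> j \<and> E i * c i i1 = E j * c j i1} \<subseteq> {1..d} \<times> {1..d}"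
      by auto
    then have "finite {(i,j). i \<in> {1..d} - {i1} \<and> j \<in> {1..d} - {i1} \<and> i \<noteq> j \<and> E i * c i i1 = E j * c j i1}"
      by (rule finite_subset) simp
    then show ?thesis unfolding Fset_def by (intro finite_UnI finite_imageI) simp_all
  qed
  have nzF: "\<forall>f\<in>Fset. \<exists>b\<in>Bp. f b \<noteq> 0"
  proof
    fix f assume "f \<in> Fset"
    then have "f \<in> c ` ({1..d} - {i1}) \<or> f \<in> (\<lambda>(i,j). \<lambda>b. E i * c i b - E j * c j b) ` {(i,j). i \<in> {1..d} - {i1} \<and> j \<in> {1..d} - {i1} \<and> i \<noteq> j \<and> E i * c i i1 = E j * c j i1}"
      unfolding Fset_def by (simp only: Un_iff)
    then show "\<exists>b\<in>Bp. f b \<noteq> 0"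
    proof
      assume "f \<in> c ` ({1..d} - {i1})"
      then obtain i where "i \<in> {1..d} - {i1}" "f = c i" by (rule imageE) simp
      then show ?thesis using F1[of i] by simp
    next
      assume "f \<in> (\<lambda>(i,j). \<lambda>b. E i * c i b - E j * c j b) ` {(i,j). i \<in> {1..d} - {i1} \<and> j \<in> {1..d} - {i1} \<and> i \<noteq> j \<and> E i * c i i1 = E j * c j i1}"
      then obtain ij where ij: "ij \<in> {(i,j). i \<in> {1..d} - {i1} \<and> j \<in> {1..d} - {i1} \<and> i \<noteq> j \<and> E i * c i i1 = E j * c j i1}"
        and fij: "f = (\<lambda>(i,j). \<lambda>b. E i * c i b - E j * c j b) ij" by (rule imageE) simp
      obtain i j where "ij = (i, j)" by (cases ij)
      then show ?thesis using ij fij F2[of i j] by simp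
    qed
  qed
  have finBp: "finite Bp" using finB by (simp add: Bp_def)
  obtain y where y: "\<forall>f\<in>Fset. (\<Sum>b\<in>Bp. f b * y b) \<noteq> 0"
    using avoid_forms[OF finBp finF nzF] by blast
  define r where "r i = (\<Sum>b\<in>Bp. c i b * y b)" for i
  have r_nz: "r i \<noteq> 0" if "i \<in> {1..d}" "i \<noteq> i1" for i
  proof -
    have "c i \<in> Fset" unfolding Fset_def using that by (intro UnI1 imageI) simp
    then show ?thesis using y unfolding r_def by blast
  qed
  have rr: "E i * r i \<noteq> E j * r j"
    if ij: "i \<in> {1..d}" "j \<in> {1..d}" "i \<noteq> i1" "j \<noteq> i1" "i \<noteq> j" "E i * c i i1 = E j * c j i1" for i j
  proof -
    have "(\<lambda>b. E i * c i b - E j * c j b) \<in> Fset" unfolding Fset_def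
      by (rule UnI2, rule image_eqI[of _ _ "(i,j)"]) (use ij in auto)
    from y[rule_format, OF this] have "(\<Sum>b\<in>Bp. (E i * c i b - E j * c j b) * y b) \<noteq> 0" by simp
    moreover have "(\<Sum>b\<in>Bp. (E i * c i b - E j * c j b) * y b) = E i * r i - E j * r j"
      unfolding r_def by (simp add: sum_distrib_left sum_subtractf algebra_simps)
    ultimately show ?thesis by simp
  qed
  define TT :: int where "TT = (\<Sum>i\<in>{1..d}. \<bar>r i\<bar> + \<bar>E i * r i\<bar> + (\<Sum>j\<in>{1..d}. \<bar>E j * r j - E i * r i\<bar>))"
  define q :: nat where "q = nat (1 + TT)"
  have TT0: "TT \<ge> 0" unfolding TT_def by (intro sum_nonneg add_nonneg_nonneg) auto
  have qTT: "int q = 1 + TT" using TT0 by (simp add: q_def)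
  have q1: "q \<ge> 1" using qTT TT0 by linarith
  have bnd_i: "\<bar>r i\<bar> + \<bar>E i * r i\<bar> + (\<Sum>j\<in>{1..d}. \<bar>E j * r j - E i * r i\<bar>) \<le> TT"
    if "i \<in> {1..d}" for i
    unfolding TT_def
    by (rule member_le_sum[where f="\<lambda>i. \<bar>r i\<bar> + \<bar>E i * r i\<bar> + (\<Sum>j\<in>{1..d}. \<bar>E j * r j - E i * r i\<bar>)", OF that])
      (auto intro: sum_nonneg)
  have bnd_j: "\<bar>E j * r j - E i * r i\<bar> \<le> (\<Sum>j\<in>{1..d}. \<bar>E j * r j - E i * r i\<bar>)"
    if "j \<in> {1..d}" for i j
    by (rule member_le_sum[where f="\<lambda>j. \<bar>E j * r j - E i * r i\<bar>", OF that]) auto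
  have qr: "\<bar>r i\<bar> < int q" "\<bar>E i * r i\<bar> < int q" if "i \<in> {1..d}" for i
  proof -
    have "0 \<le> (\<Sum>j\<in>{1..d}. \<bar>E j * r j - E i * r i\<bar>)" by (rule sum_nonneg) simp
    moreover have "0 \<le> \<bar>r i\<bar>" "0 \<le> \<bar>E i * r i\<bar>" by simp_all
    ultimately show "\<bar>r i\<bar> < int q" "\<bar>E i * r i\<bar> < int q" using bnd_i[OF that] qTT by linarith+
  qed
  have qrr: "\<bar>E j * r j - E i * r i\<bar> < int q" if "i \<in> {1..d}" "j \<in> {1..d}" for i j
  proof -
    have "0 \<le> \<bar>r i\<bar>" "0 \<le> \<bar>E i * r i\<bar>" by simp_all
    then show ?thesis using bnd_i[OF that(1)] bnd_j[OF that(2), of i] qTT by linarith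
  qed
  define x where "x = y(i1 := int q)"
  define n where "n i = E i * (\<Sum>b\<in>B. c i b * x b)" for i
  have sum_x: "(\<Sum>b\<in>Bp. c i b * x b) = r i" for i
    unfolding r_def by (rule sum.cong) (auto simp: x_def Bp_def)
  have n_form: "n i = E i * (c i i1 * int q + r i)" for i
    unfolding n_def using sumB[of "\<lambda>b. c i b * x b"] sum_x by (simp add: x_def)
  have r1: "r i1 = 0" unfolding r_def c1 by (rule sum.neutral) (auto simp: Bp_def)
  have n1: "n i1 = P * int q" using n_form[of i1] r1 E1 c1 by simp
  have ndvd: "\<not> n i1 dvd n i" if i: "i \<in> {1..d}" "i \<noteq> i1" for i
  proof
    assume "n i1 dvd n i"
    then have "int q dvd n i" using n1 by (metis dvd_mult_right)
    moreover have "n i = (E i * c i i1) * int q + E i * r i" using n_form[of i] by (simp add: algebra_simps)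
    ultimately have "int q dvd E i * r i" by (simp add: dvd_add_right_iff)
    moreover have "E i * r i \<noteq> 0" using Enz[OF i(1)] r_nz[OF i] by simp
    ultimately have "\<bar>int q\<bar> \<le> \<bar>E i * r i\<bar>" by (rule dvd_imp_le_int[rotated])
    then show False using qr(2)[OF i(1)] by simp
  qed
  have n_nz: "n i \<noteq> 0" if i: "i \<in> {1..d}" for i
  proof (cases "i = i1")
    case True then show ?thesis using n1 Ppos q1 by simp
  next
    case False
    show ?thesis
    proof
      assume "n i = 0"
      then have h: "c i i1 * int q + r i = 0" using n_form[of i] Enz[OF i] by simp
      show False
      proof (cases "c i i1 = 0")
        case True then show False using h r_nz[OF i False] by simp
      next
        case cnz: False
        have "\<bar>c i i1 * int q\<bar> \<ge> int q" using cnz by (intro abs_mult_ge) auto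
        moreover have "\<bar>r i\<bar> = \<bar>c i i1 * int q\<bar>" using h by (simp add: eq_neg_iff_add_eq_0[symmetric])
        ultimately show False using qr(1)[OF i] by linarith
      qed
    qed
  qed
  have n_inj: "inj_on n {1..d}"
  proof (rule inj_onI, rule ccontr)
    fix i j assume i: "i \<in> {1..d}" and j: "j \<in> {1..d}" and eq: "n i = n j" and ne: "i \<noteq> j"
    show False
    proof (cases "i = i1 \<or> j = i1")
      case True
      then show False using ndvd i j eq ne by (metis dvd_refl)
    next
      case False
      then have ii: "i \<noteq> i1" "j \<noteq> i1" by auto
      have h: "(E i * c i i1 - E j * c j i1) * int q = E j * r j - E i * r i"
        using eq n_form[of i] n_form[of j] by (simp add: algebra_simps)
      show False
      proof (cases "E i * c i i1 = E j * c j i1")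
        case True
        then show False using h rr[OF i j ii ne True] by simp
      next
        case cne: False
        have "\<bar>(E i * c i i1 - E j * c j i1) * int q\<bar> \<ge> int q"
          using cne by (intro abs_mult_ge) auto
        then show False using h qrr[OF i j] by simp
      qed
    qed
  qed
  have approx: "\<exists>m::nat. m \<ge> 1 \<and> (\<forall>i\<in>{1..d}. dist_Z (real m * \<theta> i - of_int (n i) * t) < \<epsilon>)"
    if eps: "\<epsilon> > 0" for t \<epsilon> :: real
  proof -
    define S :: real where "S = (\<Sum>i\<in>{1..d}. \<Sum>b\<in>B. \<bar>of_int (E i * c i b)\<bar>)"
    have S0: "S \<ge> 0" unfolding S_def by (intro sum_nonneg) auto
    define \<delta> where "\<delta> = \<epsilon> / (1 + S)"
    have dpos: "\<delta> > 0" using eps S0 by (simp add: \<delta>_def)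
    have Sd: "S * \<delta> < \<epsilon>"
    proof -
      have "(1 + S) * \<delta> = \<epsilon>" using S0 by (simp add: \<delta>_def)
      then show ?thesis using dpos by (simp add: algebra_simps)
    qed
    obtain m' :: nat where m': "m' \<ge> 1"
      and m'b: "\<forall>b\<in>B. \<exists>z::int. \<bar>of_nat m' * \<theta> b - of_int z - of_int (x b) * t\<bar> < \<delta>"
      using Kpos[OF finB indB dpos i1B, where \<alpha>="\<lambda>b. of_int (x b) * t"] by blast
    from bchoice[OF m'b] obtain zf where
      zf: "\<forall>b\<in>B. \<bar>of_nat m' * \<theta> b - of_int (zf b) - of_int (x b) * t\<bar> < \<delta>" by blast
    define m where "m = nat P * m'"
    have m1: "m \<ge> 1" using Ppos m' by (simp add: m_def)
    have realm: "real m = of_int P * of_nat m'" using Ppos by (simp add: m_def)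
    show ?thesis
    proof (intro exI[of _ m] conjI ballI m1)
      fix i assume i: "i \<in> {1..d}"
      define w :: int where "w = int m' * (E i * c0 i) + (\<Sum>b\<in>B. E i * c i b * zf b)"
      define e where "e b = of_nat m' * \<theta> b - of_int (zf b) - of_int (x b) * t" for b
      have "real m * \<theta> i = of_nat m' * (of_int P * \<theta> i)" using realm by simp
      also have "\<dots> = of_nat m' * of_int (E i * c0 i) + (\<Sum>b\<in>B. of_int (E i * c i b) * (of_nat m' * \<theta> b))"
        using relP[OF i] by (simp add: distrib_left sum_distrib_left algebra_simps)
      finally have mt: "real m * \<theta> i = of_nat m' * of_int (E i * c0 i) + (\<Sum>b\<in>B. of_int (E i * c i b) * (of_nat m' * \<theta> b))" .
      have nt: "of_int (n i) * t = (\<Sum>b\<in>B. of_int (E i * c i b) * (of_int (x b) * t))"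
        unfolding n_def by (simp add: sum_distrib_left sum_distrib_right algebra_simps)
      have wt: "of_int w = of_nat m' * of_int (E i * c0 i) + (\<Sum>b\<in>B. of_int (E i * c i b) * of_int (zf b))"
        unfolding w_def by simp
      have "(\<Sum>b\<in>B. of_int (E i * c i b) * e b) = (\<Sum>b\<in>B. of_int (E i * c i b) * (of_nat m' * \<theta> b)
           - of_int (E i * c i b) * of_int (zf b) - of_int (E i * c i b) * (of_int (x b) * t))"
        by (rule sum.cong) (simp_all add: e_def algebra_simps)
      also have "\<dots> = (\<Sum>b\<in>B. of_int (E i * c i b) * (of_nat m' * \<theta> b))
           - (\<Sum>b\<in>B. of_int (E i * c i b) * of_int (zf b)) - (\<Sum>b\<in>B. of_int (E i * c i b) * (of_int (x b) * t))"
        by (simp only: sum_subtractf)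
      finally have key: "real m * \<theta> i - of_int (n i) * t - of_int w = (\<Sum>b\<in>B. of_int (E i * c i b) * e b)"
        unfolding mt nt wt by linarith
      have "\<bar>\<Sum>b\<in>B. of_int (E i * c i b) * e b\<bar> \<le> (\<Sum>b\<in>B. \<bar>of_int (E i * c i b)\<bar> * \<delta>)"
      proof -
        have "\<bar>\<Sum>b\<in>B. of_int (E i * c i b) * e b\<bar> \<le> (\<Sum>b\<in>B. \<bar>of_int (E i * c i b) * e b\<bar>)"
          by (rule sum_abs)
        also have "\<dots> \<le> (\<Sum>b\<in>B. \<bar>of_int (E i * c i b)\<bar> * \<delta>)"
        proof (rule sum_mono)
          fix b assume "b \<in> B"
          then have "\<bar>e b\<bar> \<le> \<delta>" using zf by (auto simp: e_def less_imp_le)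
          then show "\<bar>of_int (E i * c i b) * e b\<bar> \<le> \<bar>of_int (E i * c i b)\<bar> * \<delta>"
            by (simp add: abs_mult mult_left_mono del: of_int_mult of_int_abs)
        qed
        finally show ?thesis .
      qed
      also have "\<dots> = (\<Sum>b\<in>B. \<bar>of_int (E i * c i b)\<bar>) * \<delta>" by (simp add: sum_distrib_right)
      also have "\<dots> \<le> S * \<delta>"
      proof (rule mult_right_mono)
        show "(\<Sum>b\<in>B. \<bar>of_int (E i * c i b)\<bar>) \<le> S"
          unfolding S_def
          by (rule member_le_sum[where f="\<lambda>i. \<Sum>b\<in>B. \<bar>of_int (E i * c i b)\<bar>" , OF i]) (auto intro: sum_nonneg)
      qed (use dpos in simp)
      finally have "\<bar>real m * \<theta> i - of_int (n i) * t - of_int w\<bar> < \<epsilon>" using key Sd by simp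
      then show "dist_Z (real m * \<theta> i - of_int (n i) * t) < \<epsilon>"
        using dist_Z_le[of "real m * \<theta> i - of_int (n i) * t" w] by linarith
    qed
  qed
  show ?thesis
    by (rule exI[of _ n]) (use n_nz n_inj ndvd approx in blast)
qed

end
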